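(* For every $n \in \mathbb{N}$, there is a finite simple digraph $D$ with $\vec{\chi}(D) \geq n$ and $\omega(D) \leq 3$ such that $D$ has no induced directed cycle of odd length at least $5$.
   Context: A digraph is simple if for any two distinct vertices $u,v$ it has at most one of the edges $uv$, $vu$ (and no loops). The underlying undirected graph of a digraph $D$ has vertex set $V(D)$, with $u,v$ adjacent iff $uv$ or $vu$ is an edge of $D$. The clique number $\omega(D)$ of a digraph is the clique number of its underlying undirected graph. A digraph is acyclic if it contains no directed cycle. A $k$-dicoloring of $D$ is a map $f:V(D)\to\{1,\dots,k\}$ such that each color class induces an acyclic subdigraph; the dichromatic number $\vec{\chi}(D)$ is the least $k$ for which a $k$-dicoloring exists. An induced directed cycle is a directed cycle $v_1v_2\cdots v_\ell v_1$ whose vertex set induces in $D$ a subdigraph with exactly the edges $v_iv_{i+1}$ (indices mod $\ell$). *)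

theory Defs
  imports Main
begin

text \<open>A digraph is given by a vertex set V and an edge set E of ordered pairs.
  Vertices are taken from nat (every finite digraph is isomorphic to one on nat).\<close>

definition simple_digraph :: "'a set \<Rightarrow> ('a \<times> 'a) set \<Rightarrow> bool" where
  "simple_digraph V E \<longleftrightarrow> E \<subseteq> V \<times> V \<and> (\<forall>v. (v, v) \<notin> E)
     \<and> (\<forall>u v. (u, v) \<in> E \<longrightarrow> (v, u) \<notin> E)"

definition und_adj :: "('a \<times> 'a) set \<Rightarrow> 'a \<Rightarrow> 'a \<Rightarrow> bool" where
  "und_adj E u v \<longleftrightarrow> (u, v) \<in> E \<or> (v, u) \<in> E"

definition is_clique :: "'a set \<Rightarrow> ('a \<times> 'a) set \<Rightarrow> 'a set \<Rightarrow> bool" where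
  "is_clique V E K \<longleftrightarrow> K \<subseteq> V \<and> (\<forall>u\<in>K. \<forall>v\<in>K. u \<noteq> v \<longrightarrow> und_adj E u v)"

definition clique_number :: "'a set \<Rightarrow> ('a \<times> 'a) set \<Rightarrow> nat" where
  "clique_number V E = Max {card K | K. is_clique V E K}"

definition induces_acyclic :: "('a \<times> 'a) set \<Rightarrow> 'a set \<Rightarrow> bool" where
  "induces_acyclic E S \<longleftrightarrow> acyclic (E \<inter> (S \<times> S))"

definition dicoloring :: "'a set \<Rightarrow> ('a \<times> 'a) set \<Rightarrow> nat \<Rightarrow> ('a \<Rightarrow> nat) \<Rightarrow> bool" where
  "dicoloring V E k f \<longleftrightarrow> (\<forall>v\<in>V. f v \<in> {1..k})
     \<and> (\<forall>c\<in>{1..k}. induces_acyclic E {v\<in>V. f v = c})"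

definition dichromatic_number :: "'a set \<Rightarrow> ('a \<times> 'a) set \<Rightarrow> nat" where
  "dichromatic_number V E = (LEAST k. \<exists>f. dicoloring V E k f)"

definition induced_dicycle :: "'a set \<Rightarrow> ('a \<times> 'a) set \<Rightarrow> 'a list \<Rightarrow> bool" where
  "induced_dicycle V E vs \<longleftrightarrow> length vs \<ge> 2 \<and> distinct vs \<and> set vs \<subseteq> V
     \<and> E \<inter> (set vs \<times> set vs) =
        {(vs ! i, vs ! ((i + 1) mod length vs)) | i. i < length vs}"

end

theory Submission
  imports Defs "HOL-Library.Nat_Bijection"
begin

definition enc :: "nat \<Rightarrow> nat \<Rightarrow> nat \<Rightarrow> nat" where
  "enc a b c = prod_encode (a, prod_encode (b, c))"
definition t1 :: "nat \<Rightarrow> nat" where "t1 n = fst (prod_decode n)"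
definition t2 :: "nat \<Rightarrow> nat" where "t2 n = fst (prod_decode (snd (prod_decode n)))"
definition t3 :: "nat \<Rightarrow> nat" where "t3 n = snd (prod_decode (snd (prod_decode n)))"

lemma t_enc [simp]: "t1 (enc a b c) = a" "t2 (enc a b c) = b" "t3 (enc a b c) = c"
  by (simp_all add: enc_def t1_def t2_def t3_def)

definition VV :: "nat \<Rightarrow> nat set" where
  "VV N = {enc a b c | a b c. a < b \<and> b < c \<and> c < N}"

definition EE :: "nat \<Rightarrow> (nat \<times> nat) set" where
  "EE N = {(u, v). u \<in> VV N \<and> v \<in> VV N \<and> ((t1 v = t2 u \<and> t2 v = t3 u) \<or> t3 v = t1 u)}"

lemma VV_t: "u \<in> VV N \<Longrightarrow> t1 u < t2 u \<and> t2 u < t3 u \<and> t3 u < N"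
  by (auto simp: VV_def)

lemma VV_enc: "a < b \<Longrightarrow> b < c \<Longrightarrow> c < N \<Longrightarrow> enc a b c \<in> VV N"
  by (auto simp: VV_def)

lemma VV_finite: "finite (VV N)"
proof -
  have "VV N \<subseteq> (\<lambda>(a, b, c). enc a b c) ` ({..<N} \<times> {..<N} \<times> {..<N})"
  proof
    fix u assume "u \<in> VV N"
    then obtain a b c where "u = enc a b c" "a < b" "b < c" "c < N" by (auto simp: VV_def)
    then show "u \<in> (\<lambda>(a, b, c). enc a b c) ` ({..<N} \<times> {..<N} \<times> {..<N})"
      by (intro image_eqI[where x="(a, b, c)"]) auto
  qed
  then show ?thesis by (rule finite_subset) auto
qed

lemma VV_simple: "simple_digraph (VV N) (EE N)"
  unfolding simple_digraph_def
proof (intro conjI allI impI)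
  show "EE N \<subseteq> VV N \<times> VV N" by (auto simp: EE_def)
next
  fix v show "(v, v) \<notin> EE N" by (auto simp: EE_def dest: VV_t)
next
  fix u v assume "(u, v) \<in> EE N"
  then show "(v, u) \<notin> EE N"
    unfolding EE_def using VV_t[of u N] VV_t[of v N] by auto
qed

lemma adj_cases:
  assumes "und_adj (EE N) u v"
  shows "(t1 u < t1 v \<and> (t1 v = t2 u \<or> t1 v = t3 u)) \<or> (t1 v < t1 u \<and> (t1 u = t2 v \<or> t1 u = t3 v))"
  using assms unfolding und_adj_def EE_def using VV_t[of u N] VV_t[of v N] by auto

lemma clique_le3:
  assumes "is_clique (VV N) (EE N) K"
  shows "card K \<le> 3"
proof (cases "K = {}")
  case True then show ?thesis by simp
next
  case False
  have KV: "K \<subseteq> VV N" using assms by (simp add: is_clique_def)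
  then have fK: "finite K" using VV_finite finite_subset by blast
  obtain m where m: "m \<in> K" "t1 m = Min (t1 ` K)"
    using False fK by (metis (no_types, lifting) Min_in empty_is_image finite_imageI imageE)
  have mle: "\<forall>v\<in>K. t1 m \<le> t1 v" using m fK by auto
  have adj: "\<And>u v. u \<in> K \<Longrightarrow> v \<in> K \<Longrightarrow> u \<noteq> v \<Longrightarrow> und_adj (EE N) u v"
    using assms by (auto simp: is_clique_def)
  have inj: "inj_on t1 (K - {m})"
  proof (rule inj_onI)
    fix u v assume "u \<in> K - {m}" "v \<in> K - {m}" "t1 u = t1 v"
    then show "u = v" using adj_cases[OF adj, of u v] by fastforce
  qed
  have sub: "t1 ` (K - {m}) \<subseteq> {t2 m, t3 m}"
  proof
    fix x assume "x \<in> t1 ` (K - {m})"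
    then obtain v where v: "v \<in> K" "v \<noteq> m" "x = t1 v" by auto
    then show "x \<in> {t2 m, t3 m}" using adj_cases[OF adj[OF m(1) v(1)], of] mle v by fastforce
  qed
  have "card (K - {m}) \<le> 2"
  proof -
    have "card {t2 m, t3 m} \<le> 2" by (cases "t2 m = t3 m") auto
    then show ?thesis using card_inj_on_le[OF inj sub] by simp
  qed
  then show ?thesis using fK m(1) by (simp add: card_Diff_singleton_if)
qed

lemma clique_number_le3: "clique_number (VV N) (EE N) \<le> 3"
proof -
  have "{card K | K. is_clique (VV N) (EE N) K} \<subseteq> {..3}"
    using clique_le3 by auto
  moreover have "card ({}::nat set) \<in> {card K | K. is_clique (VV N) (EE N) K}"
    unfolding is_clique_def by blast
  ultimately show ?thesis unfolding clique_number_def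
    by (subst Max_le_iff) (auto intro: finite_subset[OF _ finite_atMost])
qed

lemma mod3_ne:
  fixes i L :: nat
  assumes "i < L" "5 \<le> L"
  shows "(((i + 1) mod L + 1) mod L + 1) mod L \<noteq> i"
proof -
  have "(((i + 1) mod L + 1) mod L + 1) mod L = (i + 1 + 1 + 1) mod L"
    by (simp only: mod_add_left_eq)
  also have "\<dots> = (i + 3) mod L" by (simp add: numeral_3_eq_3)
  also have "\<dots> \<noteq> i"
  proof (cases "i + 3 < L")
    case True then show ?thesis by simp
  next
    case False
    then have "(i + 3) mod L = i + 3 - L" using assms by (simp add: mod_if)
    then show ?thesis using assms False by simp
  qed
  finally show ?thesis .
qed

lemma no_long_cycle:
  assumes cyc: "induced_dicycle (VV N) (EE N) vs" and len: "5 \<le> length vs"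
  shows False
proof -
  define L where "L = length vs"
  have dist: "distinct vs" and sub: "set vs \<subseteq> VV N"
    and Ed: "EE N \<inter> (set vs \<times> set vs) = {(vs ! i, vs ! ((i + 1) mod L)) | i. i < L}"
    using cyc by (auto simp: induced_dicycle_def L_def)
  have L5: "5 \<le> L" using len by (simp add: L_def)
  have ne: "set vs \<noteq> {}" using L5 L_def by auto
  obtain m where mset: "m \<in> set vs" and mmin: "t3 m = Min (t3 ` set vs)"
    using ne by (metis (no_types, lifting) Min_in empty_is_image finite_imageI finite_set imageE)
  have mle: "\<And>v. v \<in> set vs \<Longrightarrow> t3 m \<le> t3 v" using mmin by simp
  obtain i0 where i0: "i0 < L" "vs ! i0 = m" using mset by (auto simp: in_set_conv_nth L_def)
  define i1 where "i1 = (i0 + 1) mod L"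
  define i2 where "i2 = (i1 + 1) mod L"
  have i1L: "i1 < L" and i2L: "i2 < L" using L5 by (auto simp: i1_def i2_def)
  define x where "x = vs ! i1"
  define y where "y = vs ! i2"
  have xset: "x \<in> set vs" and yset: "y \<in> set vs" using i1L i2L by (auto simp: x_def y_def L_def)
  have "(m, x) \<in> EE N \<inter> (set vs \<times> set vs)" unfolding Ed using i0 by (auto simp: x_def i1_def)
  then have mx: "(t1 x = t2 m \<and> t2 x = t3 m) \<or> t3 x = t1 m" by (auto simp: EE_def)
  have mV: "m \<in> VV N" and xV: "x \<in> VV N" and yV: "y \<in> VV N" using sub mset xset yset by auto
  have shift1: "t1 x = t2 m \<and> t2 x = t3 m"
    using mx VV_t[OF mV] mle[OF xset] by auto
  have "(x, y) \<in> EE N \<inter> (set vs \<times> set vs)" unfolding Ed using i1L by (auto simp: x_def y_def i2_def)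
  then have xy: "(t1 y = t2 x \<and> t2 y = t3 x) \<or> t3 y = t1 x" by (auto simp: EE_def)
  have shift2: "t1 y = t3 m"
    using xy shift1 VV_t[OF mV] mle[OF yset] by auto
  have "(y, m) \<in> EE N" using yV mV shift2 by (auto simp: EE_def)
  then have "(y, m) \<in> EE N \<inter> (set vs \<times> set vs)" using yset mset by auto
  then obtain j where j: "j < L" "y = vs ! j" "m = vs ! ((j + 1) mod L)" unfolding Ed by auto
  have "j = i2" using j(1,2) i2L dist by (simp add: y_def nth_eq_iff_index_eq L_def)
  moreover have "(j + 1) mod L = i0"
  proof -
    have "(j + 1) mod L < L" using L5 by simp
    then show ?thesis using j(3) i0 dist by (metis L_def nth_eq_iff_index_eq)
  qed
  ultimately show False using mod3_ne[OF i0(1) L5] by (simp add: i2_def i1_def)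
qed

lemma mono_path:
  fixes g :: "nat \<Rightarrow> nat \<Rightarrow> nat \<Rightarrow> nat" and C :: "nat set"
  assumes gC: "\<And>a b c. a < b \<Longrightarrow> b < c \<Longrightarrow> c < N \<Longrightarrow> g a b c \<in> C"
    and fC: "finite C"
    and big: "2 ^ (2 ^ card C * 2 ^ card C) < N"
  shows "\<exists>a b c d e. a < b \<and> b < c \<and> c < d \<and> d < e \<and> e < N
           \<and> g a b c = g b c d \<and> g b c d = g c d e"
proof (rule ccontr)
  assume no: "\<not> ?thesis"
  define A where "A i j = {g h i j | h. h < i}" for i j
  define B where "B i j = {g h i j | h. h < i \<and> g h i j \<in> A h i}" for i j
  define Lam where "Lam i j = (A i j, B i j)" for i j
  have key: "Lam i j \<noteq> Lam j l" if ij: "i < j" "j < l" "l < N" for i j l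
  proof
    assume eq: "Lam i j = Lam j l"
    define c where "c = g i j l"
    have "c \<in> A j l" using ij by (auto simp: A_def c_def)
    hence cA: "c \<in> A i j" using eq by (simp add: Lam_def)
    have "c \<in> B j l" using ij cA unfolding B_def c_def by blast
    hence "c \<in> B i j" using eq by (simp add: Lam_def)
    then obtain h' where h': "h' < i" "g h' i j = c" "g h' i j \<in> A h' i" by (auto simp: B_def)
    then obtain e where e: "e < h'" "g e h' i = c" by (auto simp: A_def)
    have "e < h' \<and> h' < i \<and> i < j \<and> j < l \<and> l < N
           \<and> g e h' i = g h' i j \<and> g h' i j = g i j l"
      using e h' ij by (simp add: c_def)
    then show False using no by blast
  qed
  define S where "S i = Lam i ` {j. i < j \<and> j < N}" for i
  have half: "S i \<noteq> S j" if "i < j" "j < N" for i j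
  proof
    assume eq: "S i = S j"
    have "Lam i j \<in> S i" using that by (auto simp: S_def)
    hence "Lam i j \<in> S j" using eq by simp
    then obtain l where "j < l" "l < N" "Lam j l = Lam i j" by (auto simp: S_def)
    then show False using key[of i j l] that by simp
  qed
  have inj: "inj_on S {..<N}"
  proof (rule inj_onI)
    fix i j assume "i \<in> {..<N}" "j \<in> {..<N}" "S i = S j"
    then show "i = j" using half[of i j] half[of j i] by (metis lessThan_iff linorder_neqE_nat)
  qed
  have sub: "S ` {..<N} \<subseteq> Pow (Pow C \<times> Pow C)"
  proof
    fix X assume "X \<in> S ` {..<N}"
    then obtain i where i: "i < N" "X = S i" by auto
    have "A i j \<subseteq> C \<and> B i j \<subseteq> C" if "i < j" "j < N" for j
      using that gC by (auto simp: A_def B_def)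
    then show "X \<in> Pow (Pow C \<times> Pow C)" using i by (auto simp: S_def Lam_def)
  qed
  have "card {..<N} \<le> card (Pow (Pow C \<times> Pow C))"
    by (rule card_inj_on_le[OF inj sub]) (simp add: fC)
  also have "\<dots> = 2 ^ (2 ^ card C * 2 ^ card C)"
    by (simp add: card_Pow card_cartesian_product fC)
  finally show False using big by simp
qed

lemma no_col:
  assumes col: "dicoloring (VV N) (EE N) k f" and big: "2 ^ (2 ^ k * 2 ^ k) < N"
  shows False
proof -
  define g where "g a b c = f (enc a b c)" for a b c
  have gC: "g a b c \<in> {1..k}" if "a < b" "b < c" "c < N" for a b c
    using col VV_enc[OF that] by (auto simp: dicoloring_def g_def)
  obtain a b c d e where p: "a < b" "b < c" "c < d" "d < e" "e < N"
    "g a b c = g b c d" "g b c d = g c d e"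
    using mono_path[where g=g and N=N and C="{1..k}", OF gC] big by auto
  define co where "co = g a b c"
  have coC: "co \<in> {1..k}" using gC p by (simp add: co_def)
  define S where "S = {v \<in> VV N. f v = co}"
  have acyc: "acyclic (EE N \<inter> (S \<times> S))"
    using col coC by (auto simp: dicoloring_def induces_acyclic_def S_def)
  define T1 where "T1 = enc a b c"
  define T2 where "T2 = enc b c d"
  define T3 where "T3 = enc c d e"
  have V: "T1 \<in> VV N" "T2 \<in> VV N" "T3 \<in> VV N"
    using p by (auto simp: T1_def T2_def T3_def intro!: VV_enc)
  have inS: "T1 \<in> S" "T2 \<in> S" "T3 \<in> S"
    using V p by (auto simp: S_def co_def g_def T1_def T2_def T3_def)
  have e1: "(T1, T2) \<in> EE N \<inter> (S \<times> S)" using V inS by (auto simp: EE_def T1_def T2_def)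
  have e2: "(T2, T3) \<in> EE N \<inter> (S \<times> S)" using V inS by (auto simp: EE_def T3_def T2_def)
  have e3: "(T3, T1) \<in> EE N \<inter> (S \<times> S)" using V inS by (auto simp: EE_def T1_def T3_def)
  have "(T1, T1) \<in> (EE N \<inter> (S \<times> S))\<^sup>+"
    using e1 e2 e3 by (meson trancl.r_into_trancl trancl_into_trancl)
  then show False using acyc by (simp add: acyclic_def)
qed

lemma exists_col: "\<exists>k f. dicoloring (VV N) (EE N) k f"
proof -
  define M where "M = Max (insert 0 (VV N))"
  have vM: "v \<le> M" if "v \<in> VV N" for v
    using that VV_finite by (simp add: M_def)
  have "dicoloring (VV N) (EE N) (Suc M) Suc"
    unfolding dicoloring_def
  proof (intro conjI ballI)
    fix v assume "v \<in> VV N" then show "Suc v \<in> {1..Suc M}" using vM by auto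
  next
    fix c assume "c \<in> {1..Suc M}"
    have "EE N \<inter> ({v \<in> VV N. Suc v = c} \<times> {v \<in> VV N. Suc v = c}) = {}"
      using VV_simple[of N] by (auto simp: simple_digraph_def)
    then show "induces_acyclic (EE N) {v \<in> VV N. Suc v = c}"
      by (simp add: induces_acyclic_def acyclic_def)
  qed
  then show ?thesis by blast
qed

theorem theorem1p5:
  fixes n :: nat
  shows "\<exists>(V :: nat set) E. finite V \<and> simple_digraph V E
           \<and> dichromatic_number V E \<ge> n \<and> clique_number V E \<le> 3
           \<and> \<not> (\<exists>vs. induced_dicycle V E vs \<and> odd (length vs) \<and> length vs \<ge> 5)"
proof -
  define N where "N = Suc (2 ^ (2 ^ n * 2 ^ n))"
  have dn: "dichromatic_number (VV N) (EE N) \<ge> n"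
  proof (rule ccontr)
    assume "\<not> ?thesis"
    then have lt: "dichromatic_number (VV N) (EE N) < n" by simp
    define K where "K = dichromatic_number (VV N) (EE N)"
    have "\<exists>f. dicoloring (VV N) (EE N) K f"
      unfolding K_def dichromatic_number_def using exists_col by (rule LeastI_ex)
    then obtain f where f: "dicoloring (VV N) (EE N) K f" by blast
    have "2 ^ K * 2 ^ K \<le> (2::nat) ^ n * 2 ^ n"
      using lt K_def by (intro mult_le_mono power_increasing) auto
    then have "(2::nat) ^ (2 ^ K * 2 ^ K) \<le> 2 ^ (2 ^ n * 2 ^ n)"
      by (rule power_increasing) simp
    then have "2 ^ (2 ^ K * 2 ^ K) < N" unfolding N_def by (rule le_imp_less_Suc)
    then show False using no_col[OF f] by blast
  qed
  show ?thesis
    using VV_finite VV_simple dn clique_number_le3 no_long_cycle by blast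
qed

end
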